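(* Let $m$ be odd and let $f:\mathbb{Z}_m\to\{\pm1,\pm\mathrm{i}\}$ be an OQS. Then $R_f(w)\in\{1,-1\}$ (in particular $R_f(w)$ is real) for all $1\le w\le m-1$.
   Context: $\mathrm{i}=\sqrt{-1}$. For $f:\mathbb{Z}_m\to\mathbb{C}$, $R_f(w)=\sum_{k\in\mathbb{Z}_m}f(k)\overline{f(k+w)}$. A quaternary sequence $f:\mathbb{Z}_m\to\{\pm1,\pm\mathrm{i}\}$ of odd length $m$ is an OQS if $|R_f(w)|=1$ for all $1\le w\le m-1$. *)

theory Defs
  imports Complex_Main
begin

text \<open>Sequences on Z_m are represented as functions on nat, of which only the
values on {0..<m} matter; indices are reduced mod m.\<close>

definition periodic_autocorr :: "nat \<Rightarrow> (nat \<Rightarrow> complex) \<Rightarrow> nat \<Rightarrow> complex" where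
  "periodic_autocorr m f w = (\<Sum>k<m. f k * cnj (f ((k + w) mod m)))"

definition quaternary_seq :: "nat \<Rightarrow> (nat \<Rightarrow> complex) \<Rightarrow> bool" where
  "quaternary_seq m f \<longleftrightarrow> (\<forall>k<m. f k \<in> {1, -1, \<i>, -\<i>})"

definition OQS :: "nat \<Rightarrow> (nat \<Rightarrow> complex) \<Rightarrow> bool" where
  "OQS m f \<longleftrightarrow> odd m \<and> quaternary_seq m f \<and>
     (\<forall>w. 1 \<le> w \<and> w \<le> m - 1 \<longrightarrow> cmod (periodic_autocorr m f w) = 1)"

end

theory Submission
  imports Defs "HOL-Number_Theory.Cong"
begin

lemma shift_inj: "inj_on (\<lambda>k. (k + w) mod m) {..<(m::nat)}"
proof
  fix a b assume "a \<in> {..<m}" "b \<in> {..<m}" "(a + w) mod m = (b + w) mod m"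
  then have "[a + w = b + w] (mod m)" by (simp add: cong_def)
  then have "[a = b] (mod m)" by (simp add: cong_add_rcancel_nat)
  then show "a = b" using \<open>a \<in> {..<m}\<close> \<open>b \<in> {..<m}\<close> by (simp add: cong_def)
qed

lemma shift_sum:
  assumes "m > 0"
  shows "(\<Sum>k<m. g ((k + w) mod m)) = (\<Sum>k<(m::nat). (g k :: int))"
proof -
  have img: "(\<lambda>k. (k + w) mod m) ` {..<m} = {..<m}"
    by (rule endo_inj_surj) (use shift_inj assms in auto)
  have "(\<Sum>k<m. g k) = sum g ((\<lambda>k. (k + w) mod m) ` {..<m})" by (simp add: img)
  also have "\<dots> = (\<Sum>k<m. g ((k + w) mod m))"
    by (subst sum.reindex[OF shift_inj]) simp
  finally show ?thesis by simp
qed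

lemma fm1: "\<lfloor>-1::real\<rfloor> = -1" by (simp add: floor_eq_iff)

lemma quad: "a \<in> {1,-1,\<i>,-\<i>} \<Longrightarrow> b \<in> {1,-1,\<i>,-\<i>} \<Longrightarrow>
  Re (a * cnj b) = of_int \<lfloor>Re (a * cnj b)\<rfloor> \<and> Im (a * cnj b) = of_int \<lfloor>Im (a * cnj b)\<rfloor>
  \<and> even (\<lfloor>Re (a * cnj b)\<rfloor> + 1 + (if Im a = 0 then 0 else 1) + (if Im b = 0 then 0 else 1))
  \<and> even (\<lfloor>Im (a * cnj b)\<rfloor> + (if Im a = 0 then 0 else 1) + (if Im b = 0 then 0 else 1::int))"
  by (elim insertE emptyE; simp add: fm1)

theorem corollary2:
  fixes m :: nat and f :: "nat \<Rightarrow> complex"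
  assumes "odd m" and "OQS m f"
  shows "\<forall>w. 1 \<le> w \<and> w \<le> m - 1 \<longrightarrow> periodic_autocorr m f w \<in> {1, -1}"
proof (intro allI impI)
  fix w assume w: "1 \<le> w \<and> w \<le> m - 1"
  have m0: "m > 0" using assms(1) by (cases m) auto
  have q: "\<And>k. k < m \<Longrightarrow> f k \<in> {1,-1,\<i>,-\<i>}"
    using assms(2) unfolding OQS_def quaternary_seq_def by auto
  have c1: "cmod (periodic_autocorr m f w) = 1"
    using assms(2) w unfolding OQS_def by auto
  define t where "t k = f k * cnj (f ((k + w) mod m))" for k
  define P where "P z = (if Im z = 0 then 0 else 1::int)" for z
  define X where "X k = \<lfloor>Re (t k)\<rfloor>" for k
  define Y where "Y k = \<lfloor>Im (t k)\<rfloor>" for k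
  have Q: "Re (t k) = of_int (X k) \<and> Im (t k) = of_int (Y k) \<and>
      even (X k + 1 + P (f k) + P (f ((k + w) mod m))) \<and>
      even (Y k + P (f k) + P (f ((k + w) mod m)))" if "k < m" for k
    unfolding t_def X_def Y_def P_def
    by (rule quad) (use q that m0 in auto)
  have R: "periodic_autocorr m f w = (\<Sum>k<m. t k)"
    unfolding periodic_autocorr_def t_def by simp
  have ReR: "Re (periodic_autocorr m f w) = of_int (\<Sum>k<m. X k)"
    unfolding R Re_sum of_int_sum using Q by (intro sum.cong) auto
  have ImR: "Im (periodic_autocorr m f w) = of_int (\<Sum>k<m. Y k)"
    unfolding R Im_sum of_int_sum using Q by (intro sum.cong) auto
  have sh: "(\<Sum>k<m. P (f ((k + w) mod m))) = (\<Sum>k<m. P (f k))"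
    using shift_sum[OF m0, of "\<lambda>k. P (f k)"] by simp
  have e1: "even (\<Sum>k<m. X k + 1 + P (f k) + P (f ((k + w) mod m)))"
    using Q by (intro dvd_sum) auto
  have e2: "even (\<Sum>k<m. Y k + P (f k) + P (f ((k + w) mod m)))"
    using Q by (intro dvd_sum) auto
  have "even ((\<Sum>k<m. X k) + int m + 2 * (\<Sum>k<m. P (f k)))"
    using e1 by (simp add: sum.distrib sh)
  then have ox: "odd (\<Sum>k<m. X k)" using assms(1) by simp
  have "even ((\<Sum>k<m. Y k) + 2 * (\<Sum>k<m. P (f k)))"
    using e2 by (simp add: sum.distrib sh)
  then have ey: "even (\<Sum>k<m. Y k)" by simp
  define x where "x = (\<Sum>k<m. X k)"
  define y where "y = (\<Sum>k<m. Y k)"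
  have "(Re (periodic_autocorr m f w))^2 + (Im (periodic_autocorr m f w))^2 = 1"
    using c1 by (simp add: cmod_def)
  then have "real_of_int (x^2 + y^2) = 1" using ReR ImR x_def y_def by simp
  then have xy: "x^2 + y^2 = 1" by linarith
  have "x \<noteq> 0" using ox x_def by auto
  then have ax: "\<bar>x\<bar> \<ge> 1" by linarith
  have "x^2 = \<bar>x\<bar>^2" by simp
  then have "x^2 \<ge> 1" using one_le_power[OF ax, of 2] by simp
  moreover have "y^2 \<ge> 0" by simp
  ultimately have "y^2 = 0" "x^2 = 1" using xy by linarith+
  then have y0: "y = 0" and "x = 1 \<or> x = -1" by (simp_all add: power2_eq_1_iff)
  show "periodic_autocorr m f w \<in> {1, -1}"
  proof -
    have "Re (periodic_autocorr m f w) = of_int x" "Im (periodic_autocorr m f w) = of_int y"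
      using ReR ImR unfolding x_def y_def by simp_all
    then show ?thesis using y0 \<open>x = 1 \<or> x = -1\<close> by (auto simp: complex_eq_iff)
  qed
qed

end
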